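(* Let $L$ be a non-abelian finite group. Then every non-abelian subgroup $H$ of $L$ satisfies $C_L(H)\le H$ if and only if every maximal subgroup $M$ of $L$ has the property that each non-abelian subgroup $H$ of $M$ satisfies $C_M(H)\le H$, and $Z(L)\le\Phi(L)$.
   Context: $C_L(H)$ denotes the centralizer, $Z(L)$ the center and $\Phi(L)$ the Frattini subgroup of $L$. *)

theory Defs
  imports "HOL-Algebra.Algebra"
begin

definition centralizer_in :: "('a, 'b) monoid_scheme \<Rightarrow> 'a set \<Rightarrow> 'a set \<Rightarrow> 'a set" where
  "centralizer_in G K H = {x \<in> K. \<forall>h \<in> H. x \<otimes>\<^bsub>G\<^esub> h = h \<otimes>\<^bsub>G\<^esub> x}"

definition group_center :: "('a, 'b) monoid_scheme \<Rightarrow> 'a set" where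
  "group_center G = centralizer_in G (carrier G) (carrier G)"

definition abelian_set :: "('a, 'b) monoid_scheme \<Rightarrow> 'a set \<Rightarrow> bool" where
  "abelian_set G H \<longleftrightarrow> (\<forall>x \<in> H. \<forall>y \<in> H. x \<otimes>\<^bsub>G\<^esub> y = y \<otimes>\<^bsub>G\<^esub> x)"

definition maximal_subgroup :: "'a set \<Rightarrow> ('a, 'b) monoid_scheme \<Rightarrow> bool" where
  "maximal_subgroup M G \<longleftrightarrow> subgroup M G \<and> M \<noteq> carrier G \<and>
     (\<forall>K. subgroup K G \<and> M \<subseteq> K \<longrightarrow> K = M \<or> K = carrier G)"

text \<open>Frattini subgroup: intersection of all maximal subgroups (the whole group if none).\<close>
definition frattini :: "('a, 'b) monoid_scheme \<Rightarrow> 'a set" where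
  "frattini G = carrier G \<inter> \<Inter> {M. maximal_subgroup M G}"

definition CH_property :: "('a, 'b) monoid_scheme \<Rightarrow> bool" where
  "CH_property G \<longleftrightarrow> (\<forall>H. subgroup H G \<and> \<not> abelian_set G H \<longrightarrow>
       centralizer_in G (carrier G) H \<subseteq> H)"

end

theory Submission
  imports Defs
begin

lemma centralizer_subgroup:
  fixes G (structure)
  assumes G: "group G" and S: "S \<subseteq> carrier G"
  shows "subgroup (centralizer_in G (carrier G) S) G"
proof -
  interpret group G by (rule G)
  show ?thesis
  proof (rule subgroupI)
    show "centralizer_in G (carrier G) S \<subseteq> carrier G" by (auto simp: centralizer_in_def)
    show "centralizer_in G (carrier G) S \<noteq> {}"
      using S by (auto simp: centralizer_in_def intro!: exI[of _ "\<one>"])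
  next
    fix a assume a: "a \<in> centralizer_in G (carrier G) S"
    show "inv a \<in> centralizer_in G (carrier G) S"
      unfolding centralizer_in_def
    proof (intro CollectI conjI ballI)
      show "inv a \<in> carrier G" using a by (auto simp: centralizer_in_def)
      fix h assume h: "h \<in> S"
      have ac: "a \<in> carrier G" and hc: "h \<in> carrier G" using a h S by (auto simp: centralizer_in_def)
      have e: "a \<otimes> h = h \<otimes> a" using a h by (auto simp: centralizer_in_def)
      have "inv a \<otimes> h = inv a \<otimes> (h \<otimes> a) \<otimes> inv a"
        using ac hc by (simp add: m_assoc)
      also have "\<dots> = inv a \<otimes> (a \<otimes> h) \<otimes> inv a" using e by simp
      also have "\<dots> = h \<otimes> inv a" using ac hc by (simp add: m_assoc[symmetric])
      finally show "inv a \<otimes> h = h \<otimes> inv a" .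
    qed
  next
    fix a b assume a: "a \<in> centralizer_in G (carrier G) S" and b: "b \<in> centralizer_in G (carrier G) S"
    show "a \<otimes> b \<in> centralizer_in G (carrier G) S"
      unfolding centralizer_in_def
    proof (intro CollectI conjI ballI)
      have ac: "a \<in> carrier G" and bc: "b \<in> carrier G" using a b by (auto simp: centralizer_in_def)
      then show "a \<otimes> b \<in> carrier G" by simp
      fix h assume h: "h \<in> S"
      have hc: "h \<in> carrier G" using h S by auto
      have e1: "a \<otimes> h = h \<otimes> a" and e2: "b \<otimes> h = h \<otimes> b" using a b h by (auto simp: centralizer_in_def)
      have "a \<otimes> b \<otimes> h = a \<otimes> (h \<otimes> b)" using ac bc hc e2 by (simp add: m_assoc)
      also have "\<dots> = (a \<otimes> h) \<otimes> b" using ac bc hc by (simp add: m_assoc)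
      also have "\<dots> = h \<otimes> (a \<otimes> b)" using ac bc hc e1 by (simp add: m_assoc)
      finally show "a \<otimes> b \<otimes> h = h \<otimes> (a \<otimes> b)" .
    qed
  qed
qed

lemma exists_maximal:
  assumes G: "group G" and fin: "finite (carrier G)" and H: "subgroup H G" and ne: "H \<noteq> carrier G"
  shows "\<exists>M. maximal_subgroup M G \<and> H \<subseteq> M"
proof -
  let ?S = "{K. subgroup K G \<and> H \<subseteq> K \<and> K \<noteq> carrier G}"
  have finS: "finite ?S"
    by (rule finite_subset[of _ "Pow (carrier G)"]) (auto dest: subgroup.subset simp: fin)
  have "H \<in> ?S" using H ne by auto
  hence neS: "?S \<noteq> {}" by blast
  obtain M where M: "M \<in> ?S" and Mmax: "\<forall>K \<in> ?S. card K \<le> card M"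
  proof -
    have "Max (card ` ?S) \<in> card ` ?S" using finS neS by (intro Max_in) auto
    then obtain M where "M \<in> ?S" "card M = Max (card ` ?S)" by (metis (no_types, lifting) imageE)
    moreover have "\<forall>K \<in> ?S. card K \<le> Max (card ` ?S)" using finS by auto
    ultimately show ?thesis using that by auto
  qed
  have "maximal_subgroup M G"
    unfolding maximal_subgroup_def
  proof (intro conjI allI impI)
    show "subgroup M G" "M \<noteq> carrier G" using M by auto
    fix K assume K: "subgroup K G \<and> M \<subseteq> K"
    show "K = M \<or> K = carrier G"
    proof (cases "K = carrier G")
      case False
      hence "K \<in> ?S" using K M by auto
      hence "card K \<le> card M" using Mmax by auto
      moreover have "finite K" using K fin by (meson finite_subset subgroup.subset)
      ultimately have "K = M" using K by (metis card_seteq)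
      thus ?thesis by simp
    qed simp
  qed
  thus ?thesis using M by auto
qed

lemma abelian_set_sub: "abelian_set (G\<lparr>carrier := M\<rparr>) H = abelian_set G H"
  by (simp add: abelian_set_def)

lemma centralizer_sub: "centralizer_in (G\<lparr>carrier := M\<rparr>) M H = centralizer_in G M H"
  by (simp add: centralizer_in_def)

theorem corollary6p3:
  fixes L :: "('a, 'b) monoid_scheme"
  assumes "group L" and "finite (carrier L)" and "\<not> comm_group L"
  shows "CH_property L \<longleftrightarrow>
    ((\<forall>M. maximal_subgroup M L \<longrightarrow> CH_property (L\<lparr>carrier := M\<rparr>))
     \<and> group_center L \<subseteq> frattini L)"
proof
  interpret group L by (rule assms(1))
  assume P: "CH_property L"
  show "(\<forall>M. maximal_subgroup M L \<longrightarrow> CH_property (L\<lparr>carrier := M\<rparr>)) \<and> group_center L \<subseteq> frattini L"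
  proof (intro conjI allI impI)
    fix M assume M: "maximal_subgroup M L"
    hence MS: "subgroup M L" by (simp add: maximal_subgroup_def)
    show "CH_property (L\<lparr>carrier := M\<rparr>)"
      unfolding CH_property_def
    proof (intro allI impI)
      fix H assume H: "subgroup H (L\<lparr>carrier := M\<rparr>) \<and> \<not> abelian_set (L\<lparr>carrier := M\<rparr>) H"
      hence "subgroup H L" using incl_subgroup[OF MS] by blast
      hence "centralizer_in L (carrier L) H \<subseteq> H" using P H abelian_set_sub
        unfolding CH_property_def by metis
      moreover have "M \<subseteq> carrier L" using MS subgroup.subset by blast
      ultimately show "centralizer_in (L\<lparr>carrier := M\<rparr>) (carrier (L\<lparr>carrier := M\<rparr>)) H \<subseteq> H"
        by (auto simp: centralizer_in_def)
    qed
  next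
    show "group_center L \<subseteq> frattini L"
    proof
      fix z assume z: "z \<in> group_center L"
      have zc: "z \<in> carrier L" using z by (simp add: group_center_def centralizer_in_def)
      show "z \<in> frattini L"
        unfolding frattini_def
      proof (intro IntI InterI)
        show "z \<in> carrier L" by (rule zc)
        fix M assume "M \<in> {M. maximal_subgroup M L}"
        hence M: "maximal_subgroup M L" by simp
        hence MS: "subgroup M L" and MC: "M \<subseteq> carrier L" and Mne: "M \<noteq> carrier L"
          by (auto simp: maximal_subgroup_def dest: subgroup.subset)
        show "z \<in> M"
        proof (rule ccontr)
          assume zM: "z \<notin> M"
          show False
          proof (cases "abelian_set L M")
            case False
            hence "centralizer_in L (carrier L) M \<subseteq> M" using P MS unfolding CH_property_def by blast
            moreover have "z \<in> centralizer_in L (carrier L) M"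
              using z MC by (auto simp: group_center_def centralizer_in_def)
            ultimately show False using zM by blast
          next
            case True
            let ?C = "centralizer_in L (carrier L) M"
            have CS: "subgroup ?C L" by (rule centralizer_subgroup[OF assms(1) MC])
            have "M \<subseteq> ?C" using True MC by (auto simp: abelian_set_def centralizer_in_def)
            hence "?C = M \<or> ?C = carrier L" using M CS unfolding maximal_subgroup_def by blast
            moreover have "z \<in> ?C" using z MC by (auto simp: group_center_def centralizer_in_def)
            ultimately have CL: "?C = carrier L" using zM by blast
            have ZS: "subgroup (group_center L) L"
              unfolding group_center_def by (rule centralizer_subgroup[OF assms(1)]) simp
            have "M \<subseteq> group_center L"
              using CL MC unfolding group_center_def centralizer_in_def by force
            hence "group_center L = M \<or> group_center L = carrier L"
              using M ZS unfolding maximal_subgroup_def by blast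
            hence "group_center L = carrier L" using z zM by blast
            hence "comm_group L"
              by (intro group_comm_groupI) (auto simp: group_center_def centralizer_in_def)
            thus False using assms(3) by simp
          qed
        qed
      qed
    qed
  qed
next
  interpret group L by (rule assms(1))
  assume A: "(\<forall>M. maximal_subgroup M L \<longrightarrow> CH_property (L\<lparr>carrier := M\<rparr>)) \<and> group_center L \<subseteq> frattini L"
  show "CH_property L"
    unfolding CH_property_def
  proof (intro allI impI subsetI)
    fix H x assume H: "subgroup H L \<and> \<not> abelian_set L H"
      and x: "x \<in> centralizer_in L (carrier L) H"
    have HC: "H \<subseteq> carrier L" using H subgroup.subset by blast
    have xc: "x \<in> carrier L" using x by (simp add: centralizer_in_def)
    let ?K = "generate L (insert x H)"
    have KS: "subgroup ?K L" using generate_is_subgroup HC xc by simp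
    have HK: "insert x H \<subseteq> ?K" by (rule subsetI, erule generate.incl)
    have inM: "x \<in> H" if M: "maximal_subgroup M L" and KM: "?K \<subseteq> M" for M
    proof -
      have MS: "subgroup M L" using M by (simp add: maximal_subgroup_def)
      have HM: "H \<subseteq> M" using HK KM by blast
      have "subgroup H (L\<lparr>carrier := M\<rparr>)" using subgroup_incl H MS HM by blast
      moreover have "CH_property (L\<lparr>carrier := M\<rparr>)" using A M by blast
      moreover have "\<not> abelian_set (L\<lparr>carrier := M\<rparr>) H" using H by (simp add: abelian_set_sub)
      ultimately have "centralizer_in (L\<lparr>carrier := M\<rparr>) (carrier (L\<lparr>carrier := M\<rparr>)) H \<subseteq> H"
        unfolding CH_property_def by blast
      moreover have "x \<in> centralizer_in (L\<lparr>carrier := M\<rparr>) (carrier (L\<lparr>carrier := M\<rparr>)) H"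
        using x HK KM by (auto simp: centralizer_in_def)
      ultimately show ?thesis by blast
    qed
    show "x \<in> H"
    proof (cases "?K = carrier L")
      case False
      then obtain M where "maximal_subgroup M L" "?K \<subseteq> M"
        using exists_maximal[OF assms(1,2) KS] by blast
      thus ?thesis using inM by blast
    next
      case True
      let ?Cx = "centralizer_in L (carrier L) {x}"
      have CxS: "subgroup ?Cx L" using centralizer_subgroup[OF assms(1)] xc by simp
      have "insert x H \<subseteq> ?Cx" using x xc HC by (auto simp: centralizer_in_def)
      hence "?K \<subseteq> ?Cx" by (rule generate_subgroup_incl[OF _ CxS])
      hence "carrier L \<subseteq> ?Cx" using True by simp
      hence "x \<in> group_center L" using xc
        unfolding group_center_def centralizer_in_def by (auto simp del: insert_subset)
      hence xF: "x \<in> frattini L" using A by blast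
      show ?thesis
      proof (cases "H = carrier L")
        case True thus ?thesis using xc by simp
      next
        case False
        then obtain M where M: "maximal_subgroup M L" and HM: "H \<subseteq> M"
          using exists_maximal[OF assms(1,2)] H by blast
        have MS: "subgroup M L" using M by (simp add: maximal_subgroup_def)
        have "x \<in> M" using xF M by (simp add: frattini_def)
        hence "?K \<subseteq> M" using HM by (intro generate_subgroup_incl[OF _ MS]) auto
        thus ?thesis using inM M by blast
      qed
    qed
  qed
qed

end
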